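(* A $\mathbb{B}$-topological space $(X,\tau)$ is regular if and only if both topological spaces $(X,\tau[tt])$ and $(X,\tau[ff])$ are regular. In particular, for every topological space $(X,\mathcal{T})$, the $\mathbb{B}$-topological space $\omega(X,\mathcal{T})$ is regular if and only if $(X,\mathcal{T})$ is regular.
   Context: $\mathbb{B}=\{0,1,tt,ff\}$ is the four-element Boolean algebra with bottom $0$, top $1$, and $tt,ff$ incomparable complements; $\neg$ its complement. A $\mathbb{B}$-topology on $X$ is $\tau\subseteq\mathbb{B}^X$ containing all constant maps and closed under arbitrary pointwise joins and finite pointwise meets; $\mu$ is closed if $\neg\mu\in\tau$; $\overline{\mu}$ is the pointwise meet of all closed sets $\ge\mu$. $\tau[b]=\{\lambda[b]:\lambda\in\tau\}$ with $\lambda[b]=\{x:\lambda(x)\ge b\}$. $(X,\tau)$ is regular if for every $\lambda\in\tau$, $\lambda=\bigvee\{\mu\in\tau:\overline{\mu}\le\lambda\}$. For a topological space $(X,\mathcal{T})$, $\omega(\mathcal{T})=\{\lambda\in\mathbb{B}^X:\lambda[tt]\in\mathcal{T},\lambda[ff]\in\mathcal{T}\}$ and $\omega(X,\mathcal{T})=(X,\omega(\mathcal{T}))$. A topological space is regular if every neighbourhood of a point contains a closed neighbourhood of that point (no $T_1$ assumption). *)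

theory Defs
  imports "HOL-Analysis.Analysis" "HOL-Library.Product_Order"
begin

text \<open>The four-element Boolean algebra B = {0,1,tt,ff} is represented as bool \<times> bool
  with the componentwise order: 0 = bot = (False,False), 1 = top = (True,True),
  tt = (True,False), ff = (False,True); complement is the Boolean-algebra uminus.\<close>

type_synonym B4 = "bool \<times> bool"

definition tt :: B4 where "tt = (True, False)"
definition ff :: B4 where "ff = (False, True)"

definition Bmaps :: "'a set \<Rightarrow> ('a \<Rightarrow> B4) set" where
  "Bmaps X = {f. \<forall>x. x \<notin> X \<longrightarrow> f x = bot}"

definition constB :: "'a set \<Rightarrow> B4 \<Rightarrow> 'a \<Rightarrow> B4" where
  "constB X b = (\<lambda>x. if x \<in> X then b else bot)"

definition is_Btopology :: "'a set \<Rightarrow> ('a \<Rightarrow> B4) set \<Rightarrow> bool" where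
  "is_Btopology X \<tau> \<longleftrightarrow>
     \<tau> \<subseteq> Bmaps X \<and>
     (\<forall>b. constB X b \<in> \<tau>) \<and>
     (\<forall>S. S \<subseteq> \<tau> \<longrightarrow> (\<lambda>x. SUP f\<in>S. f x) \<in> \<tau>) \<and>
     (\<forall>f\<in>\<tau>. \<forall>g\<in>\<tau>. (\<lambda>x. inf (f x) (g x)) \<in> \<tau>)"

definition Bcompl :: "'a set \<Rightarrow> ('a \<Rightarrow> B4) \<Rightarrow> 'a \<Rightarrow> B4" where
  "Bcompl X \<mu> = (\<lambda>x. if x \<in> X then - \<mu> x else bot)"

definition Bclosed :: "'a set \<Rightarrow> ('a \<Rightarrow> B4) set \<Rightarrow> ('a \<Rightarrow> B4) \<Rightarrow> bool" where
  "Bclosed X \<tau> \<mu> \<longleftrightarrow> \<mu> \<in> Bmaps X \<and> Bcompl X \<mu> \<in> \<tau>"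

definition Bclosure :: "'a set \<Rightarrow> ('a \<Rightarrow> B4) set \<Rightarrow> ('a \<Rightarrow> B4) \<Rightarrow> 'a \<Rightarrow> B4" where
  "Bclosure X \<tau> \<mu> = (\<lambda>x. if x \<in> X then (INF \<nu>\<in>{\<nu>. Bclosed X \<tau> \<nu> \<and> (\<forall>y. \<mu> y \<le> \<nu> y)}. \<nu> x) else bot)"

definition Bregular :: "'a set \<Rightarrow> ('a \<Rightarrow> B4) set \<Rightarrow> bool" where
  "Bregular X \<tau> \<longleftrightarrow>
     (\<forall>l\<in>\<tau>. l = (\<lambda>x. SUP \<mu>\<in>{\<mu>\<in>\<tau>. \<forall>y. Bclosure X \<tau> \<mu> y \<le> l y}. \<mu> x))"

definition level :: "'a set \<Rightarrow> ('a \<Rightarrow> B4) \<Rightarrow> B4 \<Rightarrow> 'a set" where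
  "level X l b = {x \<in> X. b \<le> l x}"

definition Blevel_top :: "'a set \<Rightarrow> ('a \<Rightarrow> B4) set \<Rightarrow> B4 \<Rightarrow> 'a topology" where
  "Blevel_top X \<tau> b = topology (\<lambda>U. U \<in> (\<lambda>l. level X l b) ` \<tau>)"

definition omegaB :: "'a topology \<Rightarrow> ('a \<Rightarrow> B4) set" where
  "omegaB T = {l \<in> Bmaps (topspace T).
      openin T (level (topspace T) l tt) \<and> openin T (level (topspace T) l ff)}"

end

theory Submission imports Defs begin
lemma regular_nbhd:
  "regular_space X \<longleftrightarrow> (\<forall>W x. openin X W \<and> x \<in> W \<longrightarrow> (\<exists>U. openin X U \<and> x \<in> U \<and> X closure_of U \<subseteq> W))"
  unfolding regular_space
proof (intro iffI allI impI)
  fix W x assume H: "\<forall>C a. closedin X C \<and> a \<in> topspace X - C \<longrightarrow> (\<exists>U. openin X U \<and> a \<in> U \<and> disjnt C (X closure_of U))"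
    and o: "openin X W \<and> x \<in> W"
  then obtain U where "openin X U \<and> x \<in> U \<and> disjnt (topspace X - W) (X closure_of U)"
    using H[rule_format, of "topspace X - W" x] openin_subset by fastforce
  then show "\<exists>U. openin X U \<and> x \<in> U \<and> X closure_of U \<subseteq> W"
    using closure_of_subset_topspace by (fastforce simp: disjnt_iff)
next
  fix C a assume H: "\<forall>W x. openin X W \<and> x \<in> W \<longrightarrow> (\<exists>U. openin X U \<and> x \<in> U \<and> X closure_of U \<subseteq> W)"
    and c: "closedin X C \<and> a \<in> topspace X - C"
  then obtain U where "openin X U \<and> a \<in> U \<and> X closure_of U \<subseteq> topspace X - C"
    using H[rule_format, of "topspace X - C" a] by blast
  then show "\<exists>U. openin X U \<and> a \<in> U \<and> disjnt C (X closure_of U)"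
    by (auto simp: disjnt_iff)
qed

lemma fstSUP: "fst (SUP f\<in>S. f x) = (\<exists>f\<in>S. fst (f x))"
  by (simp add: fst_SUP)
lemma sndSUP: "snd (SUP f\<in>S. f x) = (\<exists>f\<in>S. snd (f x))"
  by (simp add: snd_SUP)
lemma fstINF: "fst (INF f\<in>S. f x) = (\<forall>f\<in>S. fst (f x))"
  by (simp add: fst_INF)
lemma sndINF: "snd (INF f\<in>S. f x) = (\<forall>f\<in>S. snd (f x))"
  by (simp add: snd_INF)
lemma level_tt: "level X f tt = {x\<in>X. fst (f x)}"
  by (auto simp: level_def tt_def less_eq_prod_def)
lemma level_ff: "level X f ff = {x\<in>X. snd (f x)}"
  by (auto simp: level_def ff_def less_eq_prod_def)

lemma bot_B4 [simp]: "(bot::B4) = (False, False)" by (simp add: bot_prod_def)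
lemma top_B4 [simp]: "(top::B4) = (True, True)" by (simp add: top_prod_def)

lemma bt_const: "is_Btopology X \<tau> \<Longrightarrow> constB X b \<in> \<tau>"
  unfolding is_Btopology_def by blast
lemma bt_inf: "is_Btopology X \<tau> \<Longrightarrow> f \<in> \<tau> \<Longrightarrow> g \<in> \<tau> \<Longrightarrow> (\<lambda>x. inf (f x) (g x)) \<in> \<tau>"
  unfolding is_Btopology_def by blast
lemma bt_Sup: "is_Btopology X \<tau> \<Longrightarrow> S \<subseteq> \<tau> \<Longrightarrow> (\<lambda>x. SUP f\<in>S. f x) \<in> \<tau>"
  unfolding is_Btopology_def by blast
lemma bt_sub: "is_Btopology X \<tau> \<Longrightarrow> \<tau> \<subseteq> Bmaps X"
  unfolding is_Btopology_def by blast

lemma bt_Bmaps: "is_Btopology X \<tau> \<Longrightarrow> f \<in> \<tau> \<Longrightarrow> x \<notin> X \<Longrightarrow> f x = bot"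
  by (auto simp: is_Btopology_def Bmaps_def)

lemma bt_fst: assumes B: "is_Btopology X \<tau>" and f: "f \<in> \<tau>"
  shows "(\<lambda>x. (fst (f x), False)) \<in> \<tau>"
proof -
  have "(\<lambda>x. inf (f x) (constB X tt x)) \<in> \<tau>" using B f by (simp add: bt_inf bt_const)
  moreover have "(\<lambda>x. inf (f x) (constB X tt x)) = (\<lambda>x. (fst (f x), False))"
  proof
    fix x show "inf (f x) (constB X tt x) = (fst (f x), False)"
      using bt_Bmaps[OF B f, of x] by (cases "x \<in> X") (auto simp: constB_def tt_def inf_prod_def)
  qed
  ultimately show ?thesis by simp
qed

lemma bt_snd: assumes B: "is_Btopology X \<tau>" and f: "f \<in> \<tau>"
  shows "(\<lambda>x. (False, snd (f x))) \<in> \<tau>"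
proof -
  have "(\<lambda>x. inf (f x) (constB X ff x)) \<in> \<tau>" using B f by (simp add: bt_inf bt_const)
  moreover have "(\<lambda>x. inf (f x) (constB X ff x)) = (\<lambda>x. (False, snd (f x)))"
  proof
    fix x show "inf (f x) (constB X ff x) = (False, snd (f x))"
      using bt_Bmaps[OF B f, of x] by (cases "x \<in> X") (auto simp: constB_def ff_def inf_prod_def)
  qed
  ultimately show ?thesis by simp
qed

lemma bt_join: assumes B: "is_Btopology X \<tau>" and "g \<in> \<tau>" "h \<in> \<tau>"
  shows "(\<lambda>x. sup (g x) (h x)) \<in> \<tau>"
proof -
  have "(\<lambda>x. SUP f\<in>{g,h}. f x) \<in> \<tau>" using assms by (intro bt_Sup) auto
  then show ?thesis by (simp del: bot_B4)
qed

lemma bt_char: assumes B: "is_Btopology X \<tau>"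
  shows "f \<in> \<tau> \<longleftrightarrow> f \<in> Bmaps X \<and> (\<lambda>x. (fst (f x), False)) \<in> \<tau> \<and> (\<lambda>x. (False, snd (f x))) \<in> \<tau>"
proof
  assume "f \<in> \<tau>" then show "f \<in> Bmaps X \<and> (\<lambda>x. (fst (f x), False)) \<in> \<tau> \<and> (\<lambda>x. (False, snd (f x))) \<in> \<tau>"
    using B bt_fst bt_snd bt_sub[OF B] by blast
next
  assume H: "f \<in> Bmaps X \<and> (\<lambda>x. (fst (f x), False)) \<in> \<tau> \<and> (\<lambda>x. (False, snd (f x))) \<in> \<tau>"
  then have "(\<lambda>x. sup (fst (f x), False) (False, snd (f x))) \<in> \<tau>" using bt_join[OF B] by blast
  moreover have "(\<lambda>x. sup (fst (f x), False) (False, snd (f x))) = f"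
    by (auto simp: sup_prod_def)
  ultimately show "f \<in> \<tau>" by simp
qed

lemma open_tt: assumes B: "is_Btopology X \<tau>"
  shows "openin (Blevel_top X \<tau> tt) U \<longleftrightarrow> U \<subseteq> X \<and> (\<lambda>x. (x \<in> U, False)) \<in> \<tau>"
proof -
  have eq: "(\<lambda>U. U \<in> (\<lambda>l. level X l tt) ` \<tau>) = (\<lambda>U. U \<subseteq> X \<and> (\<lambda>x. (x \<in> U, False)) \<in> \<tau>)"
  proof (rule ext, rule iffI)
    fix U assume "U \<in> (\<lambda>l. level X l tt) ` \<tau>"
    then obtain l where l: "l \<in> \<tau>" "U = {x\<in>X. fst (l x)}" by (auto simp: level_tt)
    have "(\<lambda>x. (fst (l x), False)) = (\<lambda>x. (x \<in> U, False))"
      using bt_Bmaps[OF B l(1)] l(2) by fastforce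
    then show "U \<subseteq> X \<and> (\<lambda>x. (x \<in> U, False)) \<in> \<tau>" using bt_fst[OF B l(1)] l(2) by auto
  next
    fix U assume "U \<subseteq> X \<and> (\<lambda>x. (x \<in> U, False)) \<in> \<tau>"
    moreover then have "U = level X (\<lambda>x. (x \<in> U, False)) tt" by (auto simp: level_tt)
    ultimately show "U \<in> (\<lambda>l. level X l tt) ` \<tau>" by blast
  qed
  have top: "istopology (\<lambda>U. U \<subseteq> X \<and> (\<lambda>x. (x \<in> U, False)) \<in> \<tau>)"
    unfolding istopology_def
  proof (rule conjI; intro allI impI)
    fix S T assume "S \<subseteq> X \<and> (\<lambda>x. (x \<in> S, False)) \<in> \<tau>" "T \<subseteq> X \<and> (\<lambda>x. (x \<in> T, False)) \<in> \<tau>"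
    then have "(\<lambda>x. inf ((\<lambda>x. (x \<in> S, False)) x) ((\<lambda>x. (x \<in> T, False)) x)) \<in> \<tau>" "S \<inter> T \<subseteq> X"
      using bt_inf[OF B] by blast+
    then show "S \<inter> T \<subseteq> X \<and> (\<lambda>x. (x \<in> S \<inter> T, False)) \<in> \<tau>" by (simp add: inf_prod_def)
  next
    fix K assume K: "\<forall>S\<in>K. S \<subseteq> X \<and> (\<lambda>x. (x \<in> S, False)) \<in> \<tau>"
    define g :: "'a set \<Rightarrow> 'a \<Rightarrow> B4" where "g = (\<lambda>S x. (x \<in> S, False))"
    have "(\<lambda>x. SUP f\<in>g ` K. f x) \<in> \<tau>" using B K by (intro bt_Sup) (auto simp: g_def)
    moreover have "(\<lambda>x. SUP f\<in>g ` K. f x) = (\<lambda>x. (x \<in> \<Union>K, False))"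
      by (rule ext, rule prod_eqI) (auto simp: fstSUP sndSUP g_def)
    ultimately show "\<Union>K \<subseteq> X \<and> (\<lambda>x. (x \<in> \<Union>K, False)) \<in> \<tau>" using K by auto
  qed
  show ?thesis unfolding Blevel_top_def eq using top by simp
qed

lemma open_ff: assumes B: "is_Btopology X \<tau>"
  shows "openin (Blevel_top X \<tau> ff) U \<longleftrightarrow> U \<subseteq> X \<and> (\<lambda>x. (False, x \<in> U)) \<in> \<tau>"
proof -
  have eq: "(\<lambda>U. U \<in> (\<lambda>l. level X l ff) ` \<tau>) = (\<lambda>U. U \<subseteq> X \<and> (\<lambda>x. (False, x \<in> U)) \<in> \<tau>)"
  proof (rule ext, rule iffI)
    fix U assume "U \<in> (\<lambda>l. level X l ff) ` \<tau>"
    then obtain l where l: "l \<in> \<tau>" "U = {x\<in>X. snd (l x)}" by (auto simp: level_ff)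
    have "(\<lambda>x. (False, snd (l x))) = (\<lambda>x. (False, x \<in> U))"
      using bt_Bmaps[OF B l(1)] l(2) by fastforce
    then show "U \<subseteq> X \<and> (\<lambda>x. (False, x \<in> U)) \<in> \<tau>" using bt_snd[OF B l(1)] l(2) by auto
  next
    fix U assume "U \<subseteq> X \<and> (\<lambda>x. (False, x \<in> U)) \<in> \<tau>"
    moreover then have "U = level X (\<lambda>x. (False, x \<in> U)) ff" by (auto simp: level_ff)
    ultimately show "U \<in> (\<lambda>l. level X l ff) ` \<tau>" by blast
  qed
  have top: "istopology (\<lambda>U. U \<subseteq> X \<and> (\<lambda>x. (False, x \<in> U)) \<in> \<tau>)"
    unfolding istopology_def
  proof (rule conjI; intro allI impI)
    fix S T assume "S \<subseteq> X \<and> (\<lambda>x. (False, x \<in> S)) \<in> \<tau>" "T \<subseteq> X \<and> (\<lambda>x. (False, x \<in> T)) \<in> \<tau>"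
    then have "(\<lambda>x. inf ((\<lambda>x. (False, x \<in> S)) x) ((\<lambda>x. (False, x \<in> T)) x)) \<in> \<tau>" "S \<inter> T \<subseteq> X"
      using bt_inf[OF B] by blast+
    then show "S \<inter> T \<subseteq> X \<and> (\<lambda>x. (False, x \<in> S \<inter> T)) \<in> \<tau>" by (simp add: inf_prod_def)
  next
    fix K assume K: "\<forall>S\<in>K. S \<subseteq> X \<and> (\<lambda>x. (False, x \<in> S)) \<in> \<tau>"
    define g :: "'a set \<Rightarrow> 'a \<Rightarrow> B4" where "g = (\<lambda>S x. (False, x \<in> S))"
    have "(\<lambda>x. SUP f\<in>g ` K. f x) \<in> \<tau>" using B K by (intro bt_Sup) (auto simp: g_def)
    moreover have "(\<lambda>x. SUP f\<in>g ` K. f x) = (\<lambda>x. (False, x \<in> \<Union>K))"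
      by (rule ext, rule prod_eqI) (auto simp: fstSUP sndSUP g_def)
    ultimately show "\<Union>K \<subseteq> X \<and> (\<lambda>x. (False, x \<in> \<Union>K)) \<in> \<tau>" using K by auto
  qed
  show ?thesis unfolding Blevel_top_def eq using top by simp
qed

lemma top_tt: assumes B: "is_Btopology X \<tau>" shows "topspace (Blevel_top X \<tau> tt) = X"
proof -
  have "constB X tt \<in> \<tau>" using B by (rule bt_const)
  moreover have "constB X tt = (\<lambda>x. (x \<in> X, False))" by (auto simp: constB_def tt_def)
  ultimately have "openin (Blevel_top X \<tau> tt) X" using open_tt[OF B] by simp
  then show ?thesis unfolding topspace_def using open_tt[OF B] by blast
qed

lemma top_ff: assumes B: "is_Btopology X \<tau>" shows "topspace (Blevel_top X \<tau> ff) = X"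
proof -
  have "constB X ff \<in> \<tau>" using B by (rule bt_const)
  moreover have "constB X ff = (\<lambda>x. (False, x \<in> X))" by (auto simp: constB_def ff_def)
  ultimately have "openin (Blevel_top X \<tau> ff) X" using open_ff[OF B] by simp
  then show ?thesis unfolding topspace_def using open_ff[OF B] by blast
qed


lemma open_of_tt: assumes B: "is_Btopology X \<tau>" and f: "f \<in> \<tau>"
  shows "openin (Blevel_top X \<tau> tt) {y\<in>X. fst (f y)}"
proof -
  have "(\<lambda>y. (y \<in> {y\<in>X. fst (f y)}, False)) = (\<lambda>y. (fst (f y), False))"
    using bt_Bmaps[OF B f] by fastforce
  then show ?thesis using open_tt[OF B] bt_fst[OF B f] by auto
qed

lemma open_of_ff: assumes B: "is_Btopology X \<tau>" and f: "f \<in> \<tau>"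
  shows "openin (Blevel_top X \<tau> ff) {y\<in>X. snd (f y)}"
proof -
  have "(\<lambda>y. (False, y \<in> {y\<in>X. snd (f y)})) = (\<lambda>y. (False, snd (f y)))"
    using bt_Bmaps[OF B f] by fastforce
  then show ?thesis using open_ff[OF B] bt_snd[OF B f] by auto
qed

lemma clos_fst: assumes B: "is_Btopology X \<tau>" and mu: "\<mu> \<in> Bmaps X" and x: "x \<in> X"
  shows "fst (Bclosure X \<tau> \<mu> x) \<longleftrightarrow> x \<in> Blevel_top X \<tau> tt closure_of {y\<in>X. fst (\<mu> y)}"
proof -
  let ?T = "Blevel_top X \<tau> tt"
  let ?S = "{y\<in>X. fst (\<mu> y)}"
  let ?C = "{\<nu>. Bclosed X \<tau> \<nu> \<and> (\<forall>y. \<mu> y \<le> \<nu> y)}"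
  have "fst (Bclosure X \<tau> \<mu> x) \<longleftrightarrow> (\<forall>\<nu>\<in>?C. fst (\<nu> x))"
    using x by (simp add: Bclosure_def fstINF)
  also have "\<dots> \<longleftrightarrow> x \<in> ?T closure_of ?S"
  proof
    assume H: "\<forall>\<nu>\<in>?C. fst (\<nu> x)"
    define \<nu> where "\<nu> = (\<lambda>y. (y \<in> ?T closure_of ?S, y \<in> X))"
    have cl: "?T closure_of ?S \<subseteq> X" using closure_of_subset_topspace[of "Blevel_top X \<tau> tt"] top_tt[OF B] by metis
    have "Bcompl X \<nu> = (\<lambda>y. (y \<in> X - ?T closure_of ?S, False))"
      by (rule ext) (auto simp: Bcompl_def \<nu>_def uminus_prod_def)
    moreover have "openin ?T (X - ?T closure_of ?S)"
      using closedin_closure_of top_tt[OF B] by (metis closedin_def)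
    ultimately have "Bcompl X \<nu> \<in> \<tau>" using open_tt[OF B] by auto
    moreover have "\<nu> \<in> Bmaps X" using cl by (auto simp: Bmaps_def \<nu>_def)
    moreover have "\<forall>y. \<mu> y \<le> \<nu> y"
    proof
      fix y show "\<mu> y \<le> \<nu> y"
      proof (cases "y \<in> X")
        case True
        have "?S \<subseteq> ?T closure_of ?S" by (rule closure_of_subset) (auto simp: top_tt[OF B])
        then show ?thesis using True by (auto simp: less_eq_prod_def \<nu>_def)
      next
        case False then show ?thesis using mu by (auto simp: Bmaps_def less_eq_prod_def)
      qed
    qed
    ultimately have "\<nu> \<in> ?C" by (simp add: Bclosed_def)
    then show "x \<in> ?T closure_of ?S" using H by (auto simp: \<nu>_def)
  next
    assume xc: "x \<in> ?T closure_of ?S"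
    show "\<forall>\<nu>\<in>?C. fst (\<nu> x)"
    proof
      fix \<nu> assume "\<nu> \<in> ?C"
      then have c: "Bcompl X \<nu> \<in> \<tau>" and le: "\<forall>y. \<mu> y \<le> \<nu> y" by (auto simp: Bclosed_def)
      let ?A = "{y\<in>X. fst (\<nu> y)}"
      have "(\<lambda>y. (fst (Bcompl X \<nu> y), False)) \<in> \<tau>" by (rule bt_fst[OF B c])
      moreover have "(\<lambda>y. (fst (Bcompl X \<nu> y), False)) = (\<lambda>y. (y \<in> X - ?A, False))"
        by (rule ext) (auto simp: Bcompl_def uminus_prod_def)
      ultimately have "openin ?T (X - ?A)" using open_tt[OF B] by auto
      then have "closedin ?T ?A" by (auto simp: closedin_def top_tt[OF B])
      moreover have "?S \<subseteq> ?A" using le by (auto simp: less_eq_prod_def)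
      ultimately have "?T closure_of ?S \<subseteq> ?A" by (rule closure_of_minimal[rotated])
      then show "fst (\<nu> x)" using xc by auto
    qed
  qed
  finally show ?thesis .
qed

lemma clos_snd: assumes B: "is_Btopology X \<tau>" and mu: "\<mu> \<in> Bmaps X" and x: "x \<in> X"
  shows "snd (Bclosure X \<tau> \<mu> x) \<longleftrightarrow> x \<in> Blevel_top X \<tau> ff closure_of {y\<in>X. snd (\<mu> y)}"
proof -
  let ?T = "Blevel_top X \<tau> ff"
  let ?S = "{y\<in>X. snd (\<mu> y)}"
  let ?C = "{\<nu>. Bclosed X \<tau> \<nu> \<and> (\<forall>y. \<mu> y \<le> \<nu> y)}"
  have "snd (Bclosure X \<tau> \<mu> x) \<longleftrightarrow> (\<forall>\<nu>\<in>?C. snd (\<nu> x))"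
    using x by (simp add: Bclosure_def sndINF)
  also have "\<dots> \<longleftrightarrow> x \<in> ?T closure_of ?S"
  proof
    assume H: "\<forall>\<nu>\<in>?C. snd (\<nu> x)"
    define \<nu> where "\<nu> = (\<lambda>y. (y \<in> X, y \<in> ?T closure_of ?S))"
    have cl: "?T closure_of ?S \<subseteq> X" using closure_of_subset_topspace[of "Blevel_top X \<tau> ff"] top_ff[OF B] by metis
    have "Bcompl X \<nu> = (\<lambda>y. (False, y \<in> X - ?T closure_of ?S))"
      by (rule ext) (auto simp: Bcompl_def \<nu>_def uminus_prod_def)
    moreover have "openin ?T (X - ?T closure_of ?S)"
      using closedin_closure_of top_ff[OF B] by (metis closedin_def)
    ultimately have "Bcompl X \<nu> \<in> \<tau>" using open_ff[OF B] by auto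
    moreover have "\<nu> \<in> Bmaps X" using cl by (auto simp: Bmaps_def \<nu>_def)
    moreover have "\<forall>y. \<mu> y \<le> \<nu> y"
    proof
      fix y show "\<mu> y \<le> \<nu> y"
      proof (cases "y \<in> X")
        case True
        have "?S \<subseteq> ?T closure_of ?S" by (rule closure_of_subset) (auto simp: top_ff[OF B])
        then show ?thesis using True by (auto simp: less_eq_prod_def \<nu>_def)
      next
        case False then show ?thesis using mu by (auto simp: Bmaps_def less_eq_prod_def)
      qed
    qed
    ultimately have "\<nu> \<in> ?C" by (simp add: Bclosed_def)
    then show "x \<in> ?T closure_of ?S" using H by (auto simp: \<nu>_def)
  next
    assume xc: "x \<in> ?T closure_of ?S"
    show "\<forall>\<nu>\<in>?C. snd (\<nu> x)"
    proof
      fix \<nu> assume "\<nu> \<in> ?C"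
      then have c: "Bcompl X \<nu> \<in> \<tau>" and le: "\<forall>y. \<mu> y \<le> \<nu> y" by (auto simp: Bclosed_def)
      let ?A = "{y\<in>X. snd (\<nu> y)}"
      have "(\<lambda>y. (False, snd (Bcompl X \<nu> y))) \<in> \<tau>" by (rule bt_snd[OF B c])
      moreover have "(\<lambda>y. (False, snd (Bcompl X \<nu> y))) = (\<lambda>y. (False, y \<in> X - ?A))"
        by (rule ext) (auto simp: Bcompl_def uminus_prod_def)
      ultimately have "openin ?T (X - ?A)" using open_ff[OF B] by auto
      then have "closedin ?T ?A" by (auto simp: closedin_def top_ff[OF B])
      moreover have "?S \<subseteq> ?A" using le by (auto simp: less_eq_prod_def)
      ultimately have "?T closure_of ?S \<subseteq> ?A" by (rule closure_of_minimal[rotated])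
      then show "snd (\<nu> x)" using xc by auto
    qed
  qed
  finally show ?thesis .
qed


lemma clos_le: assumes B: "is_Btopology X \<tau>" and mu: "\<mu> \<in> Bmaps X"
  shows "(\<forall>y. Bclosure X \<tau> \<mu> y \<le> l y) \<longleftrightarrow>
     (Blevel_top X \<tau> tt closure_of {y\<in>X. fst (\<mu> y)} \<subseteq> {y\<in>X. fst (l y)} \<and>
      Blevel_top X \<tau> ff closure_of {y\<in>X. snd (\<mu> y)} \<subseteq> {y\<in>X. snd (l y)})"
proof
  assume H: "\<forall>y. Bclosure X \<tau> \<mu> y \<le> l y"
  have c1: "Blevel_top X \<tau> tt closure_of {y\<in>X. fst (\<mu> y)} \<subseteq> X"
    using closure_of_subset_topspace[of "Blevel_top X \<tau> tt"] top_tt[OF B] by metis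
  have c2: "Blevel_top X \<tau> ff closure_of {y\<in>X. snd (\<mu> y)} \<subseteq> X"
    using closure_of_subset_topspace[of "Blevel_top X \<tau> ff"] top_ff[OF B] by metis
  show "Blevel_top X \<tau> tt closure_of {y\<in>X. fst (\<mu> y)} \<subseteq> {y\<in>X. fst (l y)} \<and>
      Blevel_top X \<tau> ff closure_of {y\<in>X. snd (\<mu> y)} \<subseteq> {y\<in>X. snd (l y)}"
  proof (intro conjI subsetI)
    fix z assume z: "z \<in> Blevel_top X \<tau> tt closure_of {y\<in>X. fst (\<mu> y)}"
    then have "z \<in> X" using c1 by blast
    then have "fst (Bclosure X \<tau> \<mu> z)" using clos_fst[OF B mu] z by blast
    then show "z \<in> {y\<in>X. fst (l y)}" using H[rule_format, of z] \<open>z \<in> X\<close> by (auto simp: less_eq_prod_def)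
  next
    fix z assume z: "z \<in> Blevel_top X \<tau> ff closure_of {y\<in>X. snd (\<mu> y)}"
    then have "z \<in> X" using c2 by blast
    then have "snd (Bclosure X \<tau> \<mu> z)" using clos_snd[OF B mu] z by blast
    then show "z \<in> {y\<in>X. snd (l y)}" using H[rule_format, of z] \<open>z \<in> X\<close> by (auto simp: less_eq_prod_def)
  qed
next
  assume H: "Blevel_top X \<tau> tt closure_of {y\<in>X. fst (\<mu> y)} \<subseteq> {y\<in>X. fst (l y)} \<and>
      Blevel_top X \<tau> ff closure_of {y\<in>X. snd (\<mu> y)} \<subseteq> {y\<in>X. snd (l y)}"
  show "\<forall>y. Bclosure X \<tau> \<mu> y \<le> l y"
  proof
    fix y show "Bclosure X \<tau> \<mu> y \<le> l y"
    proof (cases "y \<in> X")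
      case True
      then show ?thesis using H clos_fst[OF B mu True] clos_snd[OF B mu True]
        by (auto simp: less_eq_prod_def)
    next
      case False then show ?thesis by (simp add: Bclosure_def less_eq_prod_def)
    qed
  qed
qed

lemma le_of_M: assumes B: "is_Btopology X \<tau>" and mu: "\<mu> \<in> \<tau>"
  and H: "\<forall>y. Bclosure X \<tau> \<mu> y \<le> l y"
  shows "\<mu> x \<le> l x"
proof (cases "x \<in> X")
  case True
  have mB: "\<mu> \<in> Bmaps X" using bt_sub[OF B] mu by blast
  have s1: "{y\<in>X. fst (\<mu> y)} \<subseteq> Blevel_top X \<tau> tt closure_of {y\<in>X. fst (\<mu> y)}"
    by (rule closure_of_subset) (auto simp: top_tt[OF B])
  have s2: "{y\<in>X. snd (\<mu> y)} \<subseteq> Blevel_top X \<tau> ff closure_of {y\<in>X. snd (\<mu> y)}"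
    by (rule closure_of_subset) (auto simp: top_ff[OF B])
  show ?thesis using clos_le[OF B mB, of l] H s1 s2 True by (auto simp: less_eq_prod_def)
next
  case False then show ?thesis using bt_Bmaps[OF B mu] by (simp add: less_eq_prod_def)
qed


lemma part1: assumes B: "is_Btopology X \<tau>"
  shows "Bregular X \<tau> \<longleftrightarrow> regular_space (Blevel_top X \<tau> tt) \<and> regular_space (Blevel_top X \<tau> ff)"
proof
  assume R: "Bregular X \<tau>"
  have R': "\<And>l x. l \<in> \<tau> \<Longrightarrow> l x = (SUP \<mu>\<in>{\<mu>\<in>\<tau>. \<forall>y. Bclosure X \<tau> \<mu> y \<le> l y}. \<mu> x)"
  proof -
    fix l x assume "l \<in> \<tau>"
    then have "l = (\<lambda>x. SUP \<mu>\<in>{\<mu>\<in>\<tau>. \<forall>y. Bclosure X \<tau> \<mu> y \<le> l y}. \<mu> x)"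
      using R unfolding Bregular_def by blast
    then show "l x = (SUP \<mu>\<in>{\<mu>\<in>\<tau>. \<forall>y. Bclosure X \<tau> \<mu> y \<le> l y}. \<mu> x)"
      by (rule fun_cong[where x=x, THEN trans]) simp
  qed
  show "regular_space (Blevel_top X \<tau> tt) \<and> regular_space (Blevel_top X \<tau> ff)"
  proof
    show "regular_space (Blevel_top X \<tau> tt)" unfolding regular_nbhd
    proof (intro allI impI)
      fix W x assume Wx: "openin (Blevel_top X \<tau> tt) W \<and> x \<in> W"
      define l :: "'a \<Rightarrow> B4" where "l = (\<lambda>y. (y \<in> W, False))"
      have l: "l \<in> \<tau>" and WX: "W \<subseteq> X" using Wx open_tt[OF B] l_def by auto
      have "fst (l x)" using Wx l_def by simp
      then have "fst (SUP \<mu>\<in>{\<mu>\<in>\<tau>. \<forall>y. Bclosure X \<tau> \<mu> y \<le> l y}. \<mu> x)" using R'[OF l, of x] by simp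
      then obtain \<mu> where mu: "\<mu> \<in> \<tau>" "\<forall>y. Bclosure X \<tau> \<mu> y \<le> l y" "fst (\<mu> x)"
        unfolding fstSUP by blast
      have mB: "\<mu> \<in> Bmaps X" using bt_sub[OF B] mu by blast
      show "\<exists>U. openin (Blevel_top X \<tau> tt) U \<and> x \<in> U \<and> Blevel_top X \<tau> tt closure_of U \<subseteq> W"
      proof (intro exI conjI)
        show "openin (Blevel_top X \<tau> tt) {y\<in>X. fst (\<mu> y)}" by (rule open_of_tt[OF B mu(1)])
        show "x \<in> {y\<in>X. fst (\<mu> y)}" using mu Wx WX by auto
        show "Blevel_top X \<tau> tt closure_of {y\<in>X. fst (\<mu> y)} \<subseteq> W"
          using clos_le[OF B mB, of l] mu(2) by (auto simp: l_def)
      qed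
    qed
    show "regular_space (Blevel_top X \<tau> ff)" unfolding regular_nbhd
    proof (intro allI impI)
      fix W x assume Wx: "openin (Blevel_top X \<tau> ff) W \<and> x \<in> W"
      define l :: "'a \<Rightarrow> B4" where "l = (\<lambda>y. (False, y \<in> W))"
      have l: "l \<in> \<tau>" and WX: "W \<subseteq> X" using Wx open_ff[OF B] l_def by auto
      have "snd (l x)" using Wx l_def by simp
      then have "snd (SUP \<mu>\<in>{\<mu>\<in>\<tau>. \<forall>y. Bclosure X \<tau> \<mu> y \<le> l y}. \<mu> x)" using R'[OF l, of x] by simp
      then obtain \<mu> where mu: "\<mu> \<in> \<tau>" "\<forall>y. Bclosure X \<tau> \<mu> y \<le> l y" "snd (\<mu> x)"
        unfolding sndSUP by blast
      have mB: "\<mu> \<in> Bmaps X" using bt_sub[OF B] mu by blast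
      show "\<exists>U. openin (Blevel_top X \<tau> ff) U \<and> x \<in> U \<and> Blevel_top X \<tau> ff closure_of U \<subseteq> W"
      proof (intro exI conjI)
        show "openin (Blevel_top X \<tau> ff) {y\<in>X. snd (\<mu> y)}" by (rule open_of_ff[OF B mu(1)])
        show "x \<in> {y\<in>X. snd (\<mu> y)}" using mu Wx WX by auto
        show "Blevel_top X \<tau> ff closure_of {y\<in>X. snd (\<mu> y)} \<subseteq> W"
          using clos_le[OF B mB, of l] mu(2) by (auto simp: l_def)
      qed
    qed
  qed
next
  assume RR: "regular_space (Blevel_top X \<tau> tt) \<and> regular_space (Blevel_top X \<tau> ff)"
  then have R1: "\<And>W x. openin (Blevel_top X \<tau> tt) W \<Longrightarrow> x \<in> W \<Longrightarrow>
      \<exists>U. openin (Blevel_top X \<tau> tt) U \<and> x \<in> U \<and> Blevel_top X \<tau> tt closure_of U \<subseteq> W"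
   and R2: "\<And>W x. openin (Blevel_top X \<tau> ff) W \<Longrightarrow> x \<in> W \<Longrightarrow>
      \<exists>U. openin (Blevel_top X \<tau> ff) U \<and> x \<in> U \<and> Blevel_top X \<tau> ff closure_of U \<subseteq> W"
    unfolding regular_nbhd by blast+
  show "Bregular X \<tau>" unfolding Bregular_def
  proof (intro ballI ext prod_eqI)
    fix l x assume l: "l \<in> \<tau>"
    let ?M = "{\<mu>\<in>\<tau>. \<forall>y. Bclosure X \<tau> \<mu> y \<le> l y}"
    have lB: "l \<in> Bmaps X" using bt_sub[OF B] l by blast
    have le: "\<And>\<mu>. \<mu> \<in> ?M \<Longrightarrow> \<mu> x \<le> l x" using le_of_M[OF B] by blast
    show "fst (l x) = fst (SUP \<mu>\<in>?M. \<mu> x)"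
    proof
      assume fx: "fst (l x)"
      then have xX: "x \<in> X" using lB by (cases "x \<in> X") (auto simp: Bmaps_def)
      obtain U where U: "openin (Blevel_top X \<tau> tt) U" "x \<in> U"
         "Blevel_top X \<tau> tt closure_of U \<subseteq> {y\<in>X. fst (l y)}"
        using R1[OF open_of_tt[OF B l], of x] fx xX by auto
      have UX: "U \<subseteq> X" and mu: "(\<lambda>y. (y \<in> U, False)) \<in> \<tau>" using U(1) open_tt[OF B] by auto
      have mB: "(\<lambda>y. (y \<in> U, False)) \<in> Bmaps X" using bt_sub[OF B] mu by blast
      have "{y\<in>X. y \<in> U} = U" using UX by auto
      then have "(\<lambda>y. (y \<in> U, False)) \<in> ?M" using mu U(3) clos_le[OF B mB, of l] by auto
      then show "fst (SUP \<mu>\<in>?M. \<mu> x)" unfolding fstSUP using U(2) by force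
    next
      assume "fst (SUP \<mu>\<in>?M. \<mu> x)"
      then obtain \<mu> where "\<mu> \<in> ?M" "fst (\<mu> x)" unfolding fstSUP by blast
      then show "fst (l x)" using le by (auto simp: less_eq_prod_def)
    qed
    show "snd (l x) = snd (SUP \<mu>\<in>?M. \<mu> x)"
    proof
      assume fx: "snd (l x)"
      then have xX: "x \<in> X" using lB by (cases "x \<in> X") (auto simp: Bmaps_def)
      obtain U where U: "openin (Blevel_top X \<tau> ff) U" "x \<in> U"
         "Blevel_top X \<tau> ff closure_of U \<subseteq> {y\<in>X. snd (l y)}"
        using R2[OF open_of_ff[OF B l], of x] fx xX by auto
      have UX: "U \<subseteq> X" and mu: "(\<lambda>y. (False, y \<in> U)) \<in> \<tau>" using U(1) open_ff[OF B] by auto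
      have mB: "(\<lambda>y. (False, y \<in> U)) \<in> Bmaps X" using bt_sub[OF B] mu by blast
      have "{y\<in>X. y \<in> U} = U" using UX by auto
      then have "(\<lambda>y. (False, y \<in> U)) \<in> ?M" using mu U(3) clos_le[OF B mB, of l] by auto
      then show "snd (SUP \<mu>\<in>?M. \<mu> x)" unfolding sndSUP using U(2) by force
    next
      assume "snd (SUP \<mu>\<in>?M. \<mu> x)"
      then obtain \<mu> where "\<mu> \<in> ?M" "snd (\<mu> x)" unfolding sndSUP by blast
      then show "snd (l x)" using le by (auto simp: less_eq_prod_def)
    qed
  qed
qed


lemma omega_bt: "is_Btopology (topspace T) (omegaB T)"
  unfolding is_Btopology_def
proof (intro conjI allI impI ballI)
  show "omegaB T \<subseteq> Bmaps (topspace T)" by (auto simp: omegaB_def)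
next
  fix b :: B4
  have e1: "{x\<in>topspace T. fst (constB (topspace T) b x)} = (if fst b then topspace T else {})"
    by (auto simp: constB_def)
  have e2: "{x\<in>topspace T. snd (constB (topspace T) b x)} = (if snd b then topspace T else {})"
    by (auto simp: constB_def)
  show "constB (topspace T) b \<in> omegaB T"
    unfolding omegaB_def mem_Collect_eq level_tt level_ff e1 e2 by (auto simp: Bmaps_def constB_def)
next
  fix S assume S: "S \<subseteq> omegaB T"
  let ?g = "\<lambda>x. SUP f\<in>S. f x"
  have "?g \<in> Bmaps (topspace T)"
  proof -
    have "\<And>x. x \<notin> topspace T \<Longrightarrow> ?g x = bot"
    proof -
      fix x assume x: "x \<notin> topspace T"
      then have "\<forall>f\<in>S. f x = (False, False)" using S by (auto simp: omegaB_def Bmaps_def)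
      then show "?g x = bot" by (auto simp: prod_eq_iff fstSUP sndSUP)
    qed
    then show ?thesis by (simp add: Bmaps_def)
  qed
  moreover have "{x\<in>topspace T. fst (?g x)} = (\<Union>f\<in>S. {x\<in>topspace T. fst (f x)})"
    by (auto simp: fstSUP)
  moreover have "{x\<in>topspace T. snd (?g x)} = (\<Union>f\<in>S. {x\<in>topspace T. snd (f x)})"
    by (auto simp: sndSUP)
  moreover have "openin T (\<Union>f\<in>S. {x\<in>topspace T. fst (f x)})"
    using S by (intro openin_Union) (auto simp: omegaB_def level_tt)
  moreover have "openin T (\<Union>f\<in>S. {x\<in>topspace T. snd (f x)})"
    using S by (intro openin_Union) (auto simp: omegaB_def level_ff)
  ultimately show "?g \<in> omegaB T" unfolding omegaB_def level_tt level_ff by simp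
next
  fix f g assume f: "f \<in> omegaB T" and g: "g \<in> omegaB T"
  have "{x\<in>topspace T. fst (inf (f x) (g x))} = {x\<in>topspace T. fst (f x)} \<inter> {x\<in>topspace T. fst (g x)}"
    by (auto simp: inf_prod_def)
  moreover have "{x\<in>topspace T. snd (inf (f x) (g x))} = {x\<in>topspace T. snd (f x)} \<inter> {x\<in>topspace T. snd (g x)}"
    by (auto simp: inf_prod_def)
  moreover have "(\<lambda>x. inf (f x) (g x)) \<in> Bmaps (topspace T)"
    using f g by (auto simp: omegaB_def Bmaps_def)
  ultimately show "(\<lambda>x. inf (f x) (g x)) \<in> omegaB T"
    using f g unfolding omegaB_def level_tt level_ff by (auto intro: openin_Int)
qed

lemma omega_tt: "Blevel_top (topspace T) (omegaB T) tt = T"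
proof (subst topology_eq, intro allI)
  fix U
  have "openin (Blevel_top (topspace T) (omegaB T) tt) U \<longleftrightarrow> U \<subseteq> topspace T \<and> (\<lambda>x. (x \<in> U, False)) \<in> omegaB T"
    by (rule open_tt[OF omega_bt])
  also have "\<dots> \<longleftrightarrow> openin T U"
  proof
    assume H: "U \<subseteq> topspace T \<and> (\<lambda>x. (x \<in> U, False)) \<in> omegaB T"
    then have "openin T {x\<in>topspace T. x \<in> U}" unfolding omegaB_def mem_Collect_eq level_tt by simp
    moreover have "{x\<in>topspace T. x \<in> U} = U" using H by blast
    ultimately show "openin T U" by simp
  next
    assume H: "openin T U"
    then have U: "U \<subseteq> topspace T" by (rule openin_subset)
    then have "{x\<in>topspace T. x \<in> U} = U" by blast
    moreover have "{x\<in>topspace T. False} = {}" by simp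
    ultimately show "U \<subseteq> topspace T \<and> (\<lambda>x. (x \<in> U, False)) \<in> omegaB T"
      using H U unfolding omegaB_def mem_Collect_eq level_tt level_ff by (auto simp: Bmaps_def)
  qed
  finally show "openin (Blevel_top (topspace T) (omegaB T) tt) U \<longleftrightarrow> openin T U" .
qed

lemma omega_ff: "Blevel_top (topspace T) (omegaB T) ff = T"
proof (subst topology_eq, intro allI)
  fix U
  have "openin (Blevel_top (topspace T) (omegaB T) ff) U \<longleftrightarrow> U \<subseteq> topspace T \<and> (\<lambda>x. (False, x \<in> U)) \<in> omegaB T"
    by (rule open_ff[OF omega_bt])
  also have "\<dots> \<longleftrightarrow> openin T U"
  proof
    assume H: "U \<subseteq> topspace T \<and> (\<lambda>x. (False, x \<in> U)) \<in> omegaB T"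
    then have "openin T {x\<in>topspace T. x \<in> U}" unfolding omegaB_def mem_Collect_eq level_ff by simp
    moreover have "{x\<in>topspace T. x \<in> U} = U" using H by blast
    ultimately show "openin T U" by simp
  next
    assume H: "openin T U"
    then have U: "U \<subseteq> topspace T" by (rule openin_subset)
    then have "{x\<in>topspace T. x \<in> U} = U" by blast
    moreover have "{x\<in>topspace T. False} = {}" by simp
    ultimately show "U \<subseteq> topspace T \<and> (\<lambda>x. (False, x \<in> U)) \<in> omegaB T"
      using H U unfolding omegaB_def mem_Collect_eq level_tt level_ff by (auto simp: Bmaps_def)
  qed
  finally show "openin (Blevel_top (topspace T) (omegaB T) ff) U \<longleftrightarrow> openin T U" .
qed

theorem mainTheorem17:
  shows "(\<forall>(X::'a set) \<tau>. is_Btopology X \<tau> \<longrightarrow>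
            (Bregular X \<tau> \<longleftrightarrow>
               regular_space (Blevel_top X \<tau> tt) \<and> regular_space (Blevel_top X \<tau> ff)))
         \<and> (\<forall>T::'a topology. Bregular (topspace T) (omegaB T) \<longleftrightarrow> regular_space T)"
proof
  show "\<forall>(X::'a set) \<tau>. is_Btopology X \<tau> \<longrightarrow>
            (Bregular X \<tau> \<longleftrightarrow>
               regular_space (Blevel_top X \<tau> tt) \<and> regular_space (Blevel_top X \<tau> ff))"
    using part1 by blast
  show "\<forall>T::'a topology. Bregular (topspace T) (omegaB T) \<longleftrightarrow> regular_space T"
  proof
    fix T :: "'a topology"
    show "Bregular (topspace T) (omegaB T) \<longleftrightarrow> regular_space T"
      using part1[OF omega_bt[of T]] omega_tt[of T] omega_ff[of T] by simp
  qed
qed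

end
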